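(* Let $G^{\mathcal X}_r=(V_r,E^{\mathcal X}_r,s_r)$ be an extraction order. An edge $e\in E^{\mathcal X}_r$ is labeled with $j\in V_r$ (i.e., $j\in\mathcal L_e$) if and only if there exists a node $i\in V_r$ such that (i) $e$ lies on a directed path from $i$ to $j$ in $E^{\mathcal X}_r$, i.e., $e\in E_{i\leadsto j}$, and (ii) a confluence from $i$ to $j$ exists.
   Context: An extraction order of a directed graph $G_r=(V_r,E_r)$ is a rooted directed acyclic graph $G^{\mathcal X}_r=(V_r,E^{\mathcal X}_r,s_r)$ in which every node is reachable from $s_r$ and $E^{\mathcal X}_r$ is obtained from $E_r$ by reversing some (possibly no) edges. A confluence from $i$ to $j$ is a pair of directed paths in $E^{\mathcal X}_r$ from $i$ to $j$ sharing no node other than $i$ and $j$; it contains the edges of both paths. For $e\in E^{\mathcal X}_r$, $\mathcal L_e$ is the set of nodes $j$ such that $e$ belongs to some confluence with target $j$. $E_{i\leadsto j}$ denotes the set of edges of $E^{\mathcal X}_r$ that lie on some directed path from $i$ to $j$. *)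

theory Defs
  imports Main
begin

definition digraph :: "'a set \<Rightarrow> ('a \<times> 'a) set \<Rightarrow> bool" where
  "digraph V E \<longleftrightarrow> finite V \<and> E \<subseteq> V \<times> V"

definition extraction_order ::
  "'a set \<Rightarrow> ('a \<times> 'a) set \<Rightarrow> ('a \<times> 'a) set \<Rightarrow> 'a \<Rightarrow> bool" where
  "extraction_order V E Eo s \<longleftrightarrow>
     digraph V E \<and> s \<in> V \<and> acyclic Eo \<and>
     (\<exists>R \<subseteq> E. Eo = (E - R) \<union> R\<inverse>) \<and>
     (\<forall>v\<in>V. (s, v) \<in> Eo\<^sup>*)"

definition dpath :: "('a \<times> 'a) set \<Rightarrow> 'a list \<Rightarrow> 'a \<Rightarrow> 'a \<Rightarrow> bool" where
  "dpath Eo p i j \<longleftrightarrow> p \<noteq> [] \<and> hd p = i \<and> last p = j \<and> distinct p \<and>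
     (\<forall>k. Suc k < length p \<longrightarrow> (p ! k, p ! Suc k) \<in> Eo)"

definition path_edges :: "'a list \<Rightarrow> ('a \<times> 'a) set" where
  "path_edges p = set (zip p (tl p))"

definition confluence ::
  "('a \<times> 'a) set \<Rightarrow> 'a \<Rightarrow> 'a \<Rightarrow> 'a list \<Rightarrow> 'a list \<Rightarrow> bool" where
  "confluence Eo i j p q \<longleftrightarrow> dpath Eo p i j \<and> dpath Eo q i j \<and> p \<noteq> q \<and>
     set p \<inter> set q \<subseteq> {i, j}"

definition labels :: "('a \<times> 'a) set \<Rightarrow> 'a \<times> 'a \<Rightarrow> 'a set" where
  "labels Eo e = {j. \<exists>i p q. confluence Eo i j p q \<and> e \<in> path_edges p \<union> path_edges q}"

definition reach_edges :: "('a \<times> 'a) set \<Rightarrow> 'a \<Rightarrow> 'a \<Rightarrow> ('a \<times> 'a) set" where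
  "reach_edges Eo i j = {e. \<exists>p. dpath Eo p i j \<and> e \<in> path_edges p}"

end

theory Submission
  imports Defs
begin

lemma pe_Nil[simp]: "path_edges [] = {}"
  by (simp add: path_edges_def)
lemma pe_single[simp]: "path_edges [x] = {}"
  by (simp add: path_edges_def)
lemma pe_Cons2[simp]: "path_edges (x # y # zs) = insert (x, y) (path_edges (y # zs))"
  by (simp add: path_edges_def)

lemma pe_append:
  "path_edges (xs @ ys) = path_edges xs \<union> path_edges ys \<union>
     (if xs = [] \<or> ys = [] then {} else {(last xs, hd ys)})"
proof (induction xs)
  case Nil then show ?case by simp
next
  case (Cons x xs)
  then show ?case
    by (cases xs; cases ys; auto)
qed

lemma pe_mono1: "path_edges xs \<subseteq> path_edges (xs @ ys)"
  using pe_append[of xs ys] by auto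

lemma pe_mono2: "path_edges ys \<subseteq> path_edges (xs @ ys)"
  using pe_append[of xs ys] by auto

lemma pe_join:
  assumes "xs \<noteq> []" "ys \<noteq> []" "last xs = hd ys"
  shows "path_edges (xs @ tl ys) = path_edges xs \<union> path_edges ys"
proof -
  obtain y ys' where ys: "ys = y # ys'" using assms by (cases ys) auto
  show ?thesis using assms ys pe_append[of xs ys']
    by (cases ys') auto
qed

lemma set_join:
  assumes "ys \<noteq> []" "xs \<noteq> []" "last xs = hd ys"
  shows "set (xs @ tl ys) = set xs \<union> set ys"
  using assms by (cases ys) auto

lemma chain_pe:
  "(\<forall>k. Suc k < length p \<longrightarrow> (p ! k, p ! Suc k) \<in> Eo) \<longleftrightarrow> path_edges p \<subseteq> Eo"
proof (induction p)
  case Nil then show ?case by simp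
next
  case (Cons x p)
  show ?case
  proof (cases p)
    case Nil then show ?thesis by simp
  next
    case (Cons y p')
    have "(\<forall>k. Suc k < length (x # p) \<longrightarrow> ((x # p) ! k, (x # p) ! Suc k) \<in> Eo) \<longleftrightarrow>
          (x, y) \<in> Eo \<and> (\<forall>k. Suc k < length p \<longrightarrow> (p ! k, p ! Suc k) \<in> Eo)"
      using Cons
      apply (auto)
       apply (metis length_Cons less_Suc_eq_0_disj nth_Cons_0 nth_Cons_Suc zero_less_Suc)
      done
    then show ?thesis using Cons.IH Cons by auto
  qed
qed

lemma dpath_alt:
  "dpath Eo p i j \<longleftrightarrow> p \<noteq> [] \<and> hd p = i \<and> last p = j \<and> distinct p \<and> path_edges p \<subseteq> Eo"
  unfolding dpath_def chain_pe by simp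

lemma dpath_join:
  assumes "dpath Eo xs a b" "dpath Eo ys b c" "set xs \<inter> set ys \<subseteq> {b}"
  shows "dpath Eo (xs @ tl ys) a c"
    and "set (xs @ tl ys) = set xs \<union> set ys"
    and "path_edges (xs @ tl ys) = path_edges xs \<union> path_edges ys"
proof -
  have xs: "xs \<noteq> []" "hd xs = a" "last xs = b" "distinct xs" "path_edges xs \<subseteq> Eo"
    using assms(1) by (auto simp: dpath_alt)
  have ys: "ys \<noteq> []" "hd ys = b" "last ys = c" "distinct ys" "path_edges ys \<subseteq> Eo"
    using assms(2) by (auto simp: dpath_alt)
  obtain ys' where ys': "ys = b # ys'" using ys by (cases ys) auto
  show "set (xs @ tl ys) = set xs \<union> set ys" using set_join[of ys xs] xs ys by simp
  show pe: "path_edges (xs @ tl ys) = path_edges xs \<union> path_edges ys" using pe_join[of xs ys] xs ys by simp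
  have "distinct (xs @ tl ys)" using xs ys ys' assms(3) by auto
  moreover have "last (xs @ tl ys) = c" using xs ys ys' by (cases ys') auto
  moreover have "hd (xs @ tl ys) = a" using xs by simp
  ultimately show "dpath Eo (xs @ tl ys) a c" using xs ys pe by (auto simp: dpath_alt)
qed

lemma dpath_split:
  assumes "dpath Eo p a c" "x \<in> set p"
  shows "\<exists>p1 p2. dpath Eo p1 a x \<and> dpath Eo p2 x c \<and> p = p1 @ tl p2 \<and> set p1 \<inter> set p2 = {x}"
proof -
  obtain ys zs where p: "p = ys @ x # zs" using assms(2) split_list by metis
  have d: "p \<noteq> []" "hd p = a" "last p = c" "distinct p" "path_edges p \<subseteq> Eo"
    using assms(1) by (auto simp: dpath_alt)
  have pe: "path_edges p = path_edges (ys @ [x]) \<union> path_edges (x # zs)"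
    using pe_join[of "ys @ [x]" "x # zs"] p by simp
  have "dpath Eo (ys @ [x]) a x" using d p pe by (cases ys) (auto simp: dpath_alt)
  moreover have "dpath Eo (x # zs) x c" using d p pe by (cases zs) (auto simp: dpath_alt)
  moreover have "set (ys @ [x]) \<inter> set (x # zs) = {x}" using d p by auto
  ultimately show ?thesis using p by fastforce
qed

lemma pe_rtrancl: "path_edges p \<subseteq> Eo \<Longrightarrow> p \<noteq> [] \<Longrightarrow> (hd p, last p) \<in> Eo\<^sup>*"
proof (induction p)
  case Nil then show ?case by simp
next
  case (Cons x p)
  then show ?case
    by (cases p) (auto intro: converse_rtrancl_into_rtrancl)
qed

lemma dpath_trancl: "dpath Eo p a b \<Longrightarrow> a \<noteq> b \<Longrightarrow> (a, b) \<in> Eo\<^sup>+"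
  using pe_rtrancl[of p Eo] by (auto simp: dpath_alt rtrancl_eq_or_trancl)

lemma dpath_same: "dpath Eo p a a \<Longrightarrow> p = [a]"
  unfolding dpath_alt
  by (metis distinct.simps(2) hd_Cons_tl last_ConsR last_in_set list.collapse)

lemma conf_ne: "confluence Eo i j p q \<Longrightarrow> i \<noteq> j"
  unfolding confluence_def using dpath_same by metis

lemma conf_sym: "confluence Eo i j p q \<Longrightarrow> confluence Eo i j q p"
  unfolding confluence_def by auto

lemma reroute:
  assumes acy: "acyclic Eo" and conf: "confluence Eo i j p q"
    and S: "dpath Eo S x w" and xw: "x \<noteq> w" and xp: "x \<in> set p" and xj: "x \<noteq> j"
    and wC: "w \<in> set p \<union> set q" and SC: "set S \<inter> (set p \<union> set q) \<subseteq> {x, w}"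
    and notin: "\<not> path_edges S \<subseteq> path_edges p \<union> path_edges q"
  shows "\<exists>i' p' q'. confluence Eo i' j p' q' \<and> path_edges S \<subseteq> path_edges p' \<union> path_edges q'"
proof -
  have dp: "dpath Eo p i j" and dq: "dpath Eo q i j" and pq: "p \<noteq> q"
    and int: "set p \<inter> set q \<subseteq> {i, j}" using conf unfolding confluence_def by auto
  have ij: "i \<noteq> j" using conf_ne conf by metis
  have ip: "i \<in> set p" using dp unfolding dpath_alt by (metis hd_in_set)
  have iq: "i \<in> set q" using dq unfolding dpath_alt by (metis hd_in_set)
  have jq: "j \<in> set q" using dq unfolding dpath_alt by (metis last_in_set)
  have xS: "x \<in> set S" and wS: "w \<in> set S" using S by (auto simp: dpath_alt)
  obtain p1 p2 where p1: "dpath Eo p1 i x" and p2: "dpath Eo p2 x j" and pdef: "p = p1 @ tl p2"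
    and p12: "set p1 \<inter> set p2 = {x}" using dpath_split[OF dp xp] by blast
  have setp: "set p = set p1 \<union> set p2" and pep: "path_edges p = path_edges p1 \<union> path_edges p2"
    using dpath_join[OF p1 p2] p12 pdef by auto
  show ?thesis
  proof (cases "w \<in> set p \<and> w \<noteq> j")
    case True
    have wp2: "w \<in> set p2"
    proof (rule ccontr)
      assume "w \<notin> set p2" then have "w \<in> set p1" using setp True by auto
      then obtain r1 r2 where "dpath Eo r2 w x" using dpath_split[OF p1] by blast
      then have "(w, x) \<in> Eo\<^sup>+" using dpath_trancl xw by metis
      moreover have "(x, w) \<in> Eo\<^sup>+" using dpath_trancl S xw by metis
      ultimately have "(w, w) \<in> Eo\<^sup>+" by simp
      then show False using acy unfolding acyclic_def by blast
    qed
    obtain p3 p4 where p3: "dpath Eo p3 x w" and p4: "dpath Eo p4 w j" and p2def: "p2 = p3 @ tl p4"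
      and p34: "set p3 \<inter> set p4 = {w}" using dpath_split[OF p2 wp2] by blast
    have setp2: "set p2 = set p3 \<union> set p4" using dpath_join[OF p3 p4] p34 p2def by auto
    have xp3: "x \<in> set p3" using p3 by (auto simp: dpath_alt)
    have i1: "set p1 \<inter> set S \<subseteq> {x}"
    proof
      fix y assume y: "y \<in> set p1 \<inter> set S"
      then have "y \<in> {x, w}" using SC setp by auto
      moreover have "y \<noteq> w" using y p12 wp2 xw by auto
      ultimately show "y \<in> {x}" by auto
    qed
    note J1 = dpath_join[OF p1 S i1]
    have xp4: "x \<notin> set p4" using p34 xp3 xw by auto
    have i2: "set (p1 @ tl S) \<inter> set p4 \<subseteq> {w}"
    proof
      fix y assume y: "y \<in> set (p1 @ tl S) \<inter> set p4"
      then have "y \<in> set p1 \<or> y \<in> set S" using J1 by auto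
      then show "y \<in> {w}"
      proof
        assume "y \<in> set p1" then have "y = x" using y p12 setp2 by auto
        then show ?thesis using y xp4 by auto
      next
        assume "y \<in> set S" then have "y \<in> {x, w}" using y SC setp setp2 by auto
        then show ?thesis using y xp4 by auto
      qed
    qed
    note J2 = dpath_join[OF J1(1) p4 i2]
    define p' where "p' = (p1 @ tl S) @ tl p4"
    have c: "confluence Eo i j p' q"
      unfolding confluence_def
    proof (intro conjI)
      show "dpath Eo p' i j" using J2 p'_def by simp
      show "dq": "dpath Eo q i j" using dq .
      show "p' \<noteq> q"
      proof
        assume "p' = q"
        then have "path_edges S \<subseteq> path_edges q" using J1 J2 p'_def by auto
        then show False using notin by auto
      qed
      show "set p' \<inter> set q \<subseteq> {i, j}"
      proof
        fix y assume y: "y \<in> set p' \<inter> set q"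
        then have "y \<in> set p1 \<or> y \<in> set S \<or> y \<in> set p4" using J1 J2 p'_def by auto
        then have "y \<in> set p" using y SC setp setp2 True xp by auto
        then show "y \<in> {i, j}" using y int by auto
      qed
    qed
    moreover have "path_edges S \<subseteq> path_edges p' \<union> path_edges q" using J1 J2 p'_def by auto
    ultimately show ?thesis by blast
  next
    case False
    have wq: "w \<in> set q" using False wC jq by auto
    have wi: "w \<noteq> i" using False ip ij by auto
    obtain q1 q2 where q1: "dpath Eo q1 i w" and q2: "dpath Eo q2 w j" and qdef: "q = q1 @ tl q2"
      and q12: "set q1 \<inter> set q2 = {w}" using dpath_split[OF dq wq] by blast
    have setq: "set q = set q1 \<union> set q2" using dpath_join[OF q1 q2] q12 qdef by auto
    have "i \<in> set q1" using q1 unfolding dpath_alt by (metis hd_in_set)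
    then have iq2: "i \<notin> set q2" using q12 wi by auto
    have xq2: "x \<notin> set q2" using iq2 xj xp int setq by auto
    have i1: "set S \<inter> set q2 \<subseteq> {w}" using SC setq xq2 by auto
    note J = dpath_join[OF S q2 i1]
    define r where "r = S @ tl q2"
    have c: "confluence Eo x j p2 r"
      unfolding confluence_def
    proof (intro conjI)
      show "dpath Eo p2 x j" using p2 .
      show "dpath Eo r x j" using J r_def by simp
      show "p2 \<noteq> r"
      proof
        assume "p2 = r"
        then have "path_edges S \<subseteq> path_edges p" using J r_def pep by auto
        then show False using notin by auto
      qed
      show "set p2 \<inter> set r \<subseteq> {x, j}"
      proof
        fix y assume y: "y \<in> set p2 \<inter> set r"
        then have "y \<in> set S \<or> y \<in> set q2" using J r_def by auto
        then show "y \<in> {x, j}"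
        proof
          assume "y \<in> set S" then have "y \<in> {x, w}" using y SC setp by auto
          then show ?thesis using y False setp by auto
        next
          assume "y \<in> set q2" then have "y \<in> {i, j}" using y int setp setq by auto
          then show ?thesis using iq2 \<open>y \<in> set q2\<close> by auto
        qed
      qed
    qed
    moreover have "path_edges S \<subseteq> path_edges p2 \<union> path_edges r" using J r_def by auto
    ultimately show ?thesis by blast
  qed
qed

lemma pe_split: "(a, b) \<in> path_edges P \<Longrightarrow> \<exists>A B. P = A @ a # b # B"
proof (induction P)
  case Nil then show ?case by simp
next
  case (Cons x P)
  show ?case
  proof (cases P)
    case Nil then show ?thesis using Cons by simp
  next
    case (Cons y P')
    then have "(a, b) = (x, y) \<or> (a, b) \<in> path_edges P" using Cons.prems by auto
    then show ?thesis
    proof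
      assume "(a, b) = (x, y)" then show ?thesis using Cons by (metis append_Nil prod.inject)
    next
      assume "(a, b) \<in> path_edges P"
      then obtain A B where "P = A @ a # b # B" using Cons.IH by blast
      then show ?thesis by (metis append_Cons)
    qed
  qed
qed

theorem lemma13:
  fixes V :: "'a set" and E Eo :: "('a \<times> 'a) set" and s j :: 'a and e :: "'a \<times> 'a"
  assumes "extraction_order V E Eo s"
    and "e \<in> Eo"
    and "j \<in> V"
  shows "j \<in> labels Eo e \<longleftrightarrow>
         (\<exists>i\<in>V. e \<in> reach_edges Eo i j \<and> (\<exists>p q. confluence Eo i j p q))"
proof
  have EoV: "Eo \<subseteq> V \<times> V" using assms(1) unfolding extraction_order_def digraph_def by blast
  assume "j \<in> labels Eo e"
  then obtain i p q where c: "confluence Eo i j p q" and e: "e \<in> path_edges p \<union> path_edges q"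
    unfolding labels_def by blast
  have dp: "dpath Eo p i j" and dq: "dpath Eo q i j" using c unfolding confluence_def by auto
  have "(i, j) \<in> Eo\<^sup>+" using dpath_trancl dp conf_ne c by metis
  then obtain k where "(i, k) \<in> Eo" using tranclD by metis
  then have iV: "i \<in> V" using EoV by auto
  have "e \<in> reach_edges Eo i j" using e dp dq unfolding reach_edges_def by blast
  then show "\<exists>i\<in>V. e \<in> reach_edges Eo i j \<and> (\<exists>p q. confluence Eo i j p q)" using iV c by blast
next
  have acy: "acyclic Eo" using assms(1) unfolding extraction_order_def by blast
  assume "\<exists>i\<in>V. e \<in> reach_edges Eo i j \<and> (\<exists>p q. confluence Eo i j p q)"
  then obtain i P p q where dP: "dpath Eo P i j" and eP: "e \<in> path_edges P"
    and c: "confluence Eo i j p q" unfolding reach_edges_def by blast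
  show "j \<in> labels Eo e"
  proof (cases "e \<in> path_edges p \<union> path_edges q")
    case True then show ?thesis using c unfolding labels_def by blast
  next
    case False
    obtain a b where eab: "e = (a, b)" by (cases e)
    have abP: "(a, b) \<in> path_edges P" using eP eab by simp
    obtain A B where PAB: "P = A @ a # b # B" using pe_split[OF abP] by (elim exE)
    define C where "C = set p \<union> set q"
    have dp: "dpath Eo p i j" and dq: "dpath Eo q i j" using c unfolding confluence_def by auto
    have iC: "i \<in> C" using dp unfolding C_def dpath_alt by (metis UnI1 hd_in_set)
    have jC: "j \<in> C" using dp unfolding C_def dpath_alt by (metis UnI1 last_in_set)
    have Pd: "P \<noteq> []" "hd P = i" "last P = j" "distinct P" "path_edges P \<subseteq> Eo"
      using dP by (auto simp: dpath_alt)
    have "hd (A @ [a]) = i" using Pd PAB by (cases A) auto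
    moreover have "hd (A @ [a]) \<in> set (A @ [a])" by (rule hd_in_set) simp
    ultimately have "\<exists>y\<in>set (A @ [a]). y \<in> C" using iC by auto
    then have "\<exists>A1 u A2. A @ [a] = A1 @ u # A2 \<and> u \<in> C \<and> (\<forall>y\<in>set A2. y \<notin> C)"
      by (rule split_list_last_prop)
    then obtain A1 u A2 where Asp: "A @ [a] = A1 @ u # A2" and uC: "u \<in> C"
      and A2C: "\<forall>y\<in>set A2. y \<notin> C" by (elim exE conjE)
    have "last (b # B) = j" using Pd PAB by simp
    moreover have "last (b # B) \<in> set (b # B)" by (rule last_in_set) simp
    ultimately have "\<exists>y\<in>set (b # B). y \<in> C" using jC by auto
    then have "\<exists>B1 w B2. b # B = B1 @ w # B2 \<and> w \<in> C \<and> (\<forall>y\<in>set B1. y \<notin> C)"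
      by (rule split_list_first_prop)
    then obtain B1 w B2 where Bsp: "b # B = B1 @ w # B2" and wC: "w \<in> C"
      and B1C: "\<forall>y\<in>set B1. y \<notin> C" by (elim exE conjE)
    define S where "S = u # A2 @ B1 @ [w]"
    have PS: "P = A1 @ S @ B2"
    proof -
      have "P = (A @ [a]) @ (b # B)" using PAB by simp
      then show ?thesis using Asp Bsp S_def by simp
    qed
    have peS: "path_edges S \<subseteq> path_edges P"
      using PS pe_mono1[of S B2] pe_mono2[of "S @ B2" A1] by simp
    have distS: "distinct S" using PS Pd by simp
    have dS: "dpath Eo S u w" using distS peS Pd S_def by (auto simp: dpath_alt)
    have "last (A1 @ u # A2) = last (u # A2)" by simp
    then have la: "last (u # A2) = a" using Asp by (metis last_snoc)
    have hb: "hd (B1 @ [w]) = b" using Bsp by (cases B1) auto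
    have "S = (u # A2) @ (B1 @ [w])" using S_def by simp
    then have eS: "e \<in> path_edges S" using pe_append[of "u # A2" "B1 @ [w]"] la hb eab by auto
    have uw: "u \<noteq> w" using distS S_def by auto
    have uj: "u \<noteq> j"
    proof -
      have "last P \<in> set (w # B2)" using PS S_def by (cases B2) auto
      moreover have "u \<notin> set (w # B2)" using Pd PS S_def by auto
      ultimately show ?thesis using Pd by auto
    qed
    have SC: "set S \<inter> (set p \<union> set q) \<subseteq> {u, w}" using A2C B1C S_def C_def by auto
    have notin: "\<not> path_edges S \<subseteq> path_edges p \<union> path_edges q" using eS False by auto
    have wC': "w \<in> set p \<union> set q" using wC C_def by simp
    have "\<exists>i' p' q'. confluence Eo i' j p' q' \<and> path_edges S \<subseteq> path_edges p' \<union> path_edges q'"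
    proof (cases "u \<in> set p")
      case True
      show ?thesis by (rule reroute[OF acy c dS uw True uj wC' SC notin])
    next
      case False
      then have uq: "u \<in> set q" using uC C_def by simp
      show ?thesis
        by (rule reroute[OF acy conf_sym[OF c] dS uw uq uj]) (use wC' SC notin in auto)
    qed
    then show ?thesis using eS unfolding labels_def by blast
  qed
qed

end
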